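(* Let $p$ be a prime. There exists a subset $A\subseteq\mathbb{F}_p$ with $A-A\doteq\mathcal{R}_p$ if and only if $p=2n(n-1)+1$ for some integer $n$ and there exists $\alpha\in\mathcal{O}$ such that $|\alpha|^2=n+\rho$ and $\operatorname{tr}(\alpha\zeta^{-k})\in\{-n,p-n\}$ for every integer $k$.
   Context: $\mathcal{R}_p$ is the set of nonzero quadratic residues modulo $p$. $A-A\doteq S$ means: every element of $S$ has exactly one representation as $a'-a''$ with $a',a''\in A$, and every difference $a'-a''$ with $a'\ne a''$ in $A$ lies in $S$. $\zeta\in\mathbb{C}$ is a primitive $p$-th root of unity, $K=\mathbb{Q}(\zeta)$, $\mathcal{O}=\mathbb{Z}[\zeta]$ its ring of integers, $\operatorname{tr}$ the trace from $K$ to $\mathbb{Q}$, $|\cdot|$ the complex absolute value, and $\rho:=\sum_{x\in\mathcal{R}_p}\zeta^x$ (the quadratic Gaussian period, equal to $(\sqrt p-1)/2$ for $\zeta=e^{2\pi i/p}$ when $p\equiv1\pmod 4$). *)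

theory Defs
  imports Complex_Main "HOL-Number_Theory.Number_Theory" "HOL-Computational_Algebra.Polynomial"
begin

definition Fp :: "nat \<Rightarrow> int set" where
  "Fp p = {0..<int p}"

definition quad_res_set :: "nat \<Rightarrow> int set" where
  "quad_res_set p = {x \<in> {1..<int p}. QuadRes (int p) x}"

definition diff_exact :: "nat \<Rightarrow> int set \<Rightarrow> int set \<Rightarrow> bool" where
  "diff_exact p A S \<longleftrightarrow>
     (\<forall>s\<in>S. \<exists>!(a1, a2). a1 \<in> A \<and> a2 \<in> A \<and> (a1 - a2) mod int p = s) \<and>
     (\<forall>a1\<in>A. \<forall>a2\<in>A. a1 \<noteq> a2 \<longrightarrow> (a1 - a2) mod int p \<in> S)"

text \<open>Ring of integers Z[zeta] of Q(zeta), as a subset of the complex numbers.\<close>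
definition cyc_int :: "nat \<Rightarrow> complex \<Rightarrow> complex set" where
  "cyc_int p \<zeta> = {\<beta>. \<exists>c :: nat \<Rightarrow> int. \<beta> = (\<Sum>j<p. of_int (c j) * \<zeta> ^ j)}"

text \<open>Trace from Q(zeta) to Q: sum of the conjugates sigma_j(beta), j = 1..p-1,
  where sigma_j sends zeta to zeta^j; beta is written as a rational polynomial in zeta.\<close>
definition cyc_trace :: "nat \<Rightarrow> complex \<Rightarrow> complex \<Rightarrow> complex" where
  "cyc_trace p \<zeta> \<beta> = (THE t. \<exists>q :: rat poly. poly (map_poly of_rat q) \<zeta> = \<beta> \<and>
       t = (\<Sum>j\<in>{1..<p}. poly (map_poly of_rat q) (\<zeta> ^ j)))"

definition gauss_period :: "nat \<Rightarrow> complex \<Rightarrow> complex" where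
  "gauss_period p \<zeta> = (\<Sum>x\<in>quad_res_set p. \<zeta> powi x)"

end

theory Submission
  imports Defs
begin


definition cycl :: "nat \<Rightarrow> 'a::comm_ring_1 poly" where "cycl p = (\<Sum>i<p. monom 1 i)"
definition psi :: "nat \<Rightarrow> int poly" where "psi p = (\<Sum>k<p. monom (of_nat (p choose (k+1))) k)"

lemma poly_cycl: "poly (cycl p) x = (\<Sum>i<p. x^i)"
  by (simp add: cycl_def poly_sum poly_monom)

lemma coeff_cycl: "coeff (cycl p) i = (if i < p then 1 else 0)"
  by (simp add: cycl_def coeff_sum coeff_monom)

lemma coeff_psi: "coeff (psi p) i = (if i < p then of_nat (p choose (i+1)) else 0)"
  by (simp add: psi_def coeff_sum coeff_monom)

lemma poly_psi: "y * poly (psi p) y = (1+y)^p - 1"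
proof (cases p)
  case 0 then show ?thesis by (simp add: psi_def)
next
  case (Suc m)
  have "(1+y)^p = (\<Sum>k\<le>p. of_nat (p choose k) * y^k * 1^(p-k))"
    using binomial_ring[of y 1 p] by (simp add: add.commute)
  also have "\<dots> = 1 + (\<Sum>k<p. of_nat (p choose (Suc k)) * y^(Suc k))"
    unfolding Suc by (subst sum.atMost_shift) simp
  finally show ?thesis
    by (simp add: psi_def poly_sum poly_monom sum_distrib_left algebra_simps)
qed

lemma pcompose_cycl: "pcompose (cycl p) [:1,1:] = psi p"
proof -
  have "[:0,1:] * pcompose (cycl p) [:1,1:] = [:0,1:] * psi p"
  proof (rule poly_ext)
    fix y :: int
    have "poly ([:0,1:] * pcompose (cycl p) [:1,1:]) y = y * (\<Sum>i<p. (1+y)^i)"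
      by (simp add: poly_pcompose poly_cycl)
    also have "\<dots> = (1+y)^p - 1" using power_diff_1_eq[of "1+y" p] by simp
    also have "\<dots> = poly ([:0,1:] * psi p) y" using poly_psi[of y p] by simp
    finally show "poly ([:0,1:] * pcompose (cycl p) [:1,1:]) y = poly ([:0,1:] * psi p) y" .
  qed
  then show ?thesis by simp
qed

lemma eisenstein_core:
  fixes F G H :: "int poly" and q :: int
  assumes q: "prime q" and H: "F * G = H"
    and F0: "q dvd coeff F 0" and G0: "\<not> q dvd coeff G 0"
    and low: "\<And>k. k < degree H \<Longrightarrow> q dvd coeff H k"
    and lead: "\<not> q dvd lead_coeff H"
  shows "degree G = 0"
proof (rule ccontr)
  assume dG: "degree G \<noteq> 0"
  have H0: "H \<noteq> 0" using lead by auto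
  then have nz: "F \<noteq> 0" "G \<noteq> 0" using H by auto
  have dH: "degree H = degree F + degree G" using H nz by (metis degree_mult_eq)
  have all: "\<forall>i\<le>i0. q dvd coeff F i" if "i0 \<le> degree F" for i0
    using that
  proof (induction i0)
    case 0 then show ?case using F0 by simp
  next
    case (Suc i)
    have IH: "\<forall>j\<le>i. q dvd coeff F j" using Suc by simp
    have "q dvd coeff H (Suc i)" using low Suc.prems dH dG by simp
    also have "coeff H (Suc i) = (\<Sum>j\<le>Suc i. coeff F j * coeff G (Suc i - j))"
      unfolding H[symmetric] by (simp add: coeff_mult)
    also have "\<dots> = (\<Sum>j\<le>i. coeff F j * coeff G (Suc i - j)) + coeff F (Suc i) * coeff G 0"
      by simp
    finally have "q dvd (\<Sum>j\<le>i. coeff F j * coeff G (Suc i - j)) + coeff F (Suc i) * coeff G 0" .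
    moreover have "q dvd (\<Sum>j\<le>i. coeff F j * coeff G (Suc i - j))"
      using IH by (intro dvd_sum) auto
    ultimately have "q dvd coeff F (Suc i) * coeff G 0" using dvd_add_right_iff by blast
    then have "q dvd coeff F (Suc i)" using G0 q prime_dvd_mult_iff by blast
    then show ?case using IH le_Suc_eq by auto
  qed
  then have "q dvd lead_coeff F" by auto
  then have "q dvd lead_coeff H" using H by (auto simp: lead_coeff_mult)
  with lead show False by simp
qed

lemma eisenstein:
  fixes F G H :: "int poly" and q :: int
  assumes q: "prime q" and H: "F * G = H" and dH: "degree H > 0"
    and low: "\<And>k. k < degree H \<Longrightarrow> q dvd coeff H k"
    and lead: "\<not> q dvd lead_coeff H"
    and c0: "\<not> q^2 dvd coeff H 0"
  shows "degree F = 0 \<or> degree G = 0"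
proof -
  have "q dvd coeff H 0" using low dH by simp
  then have d: "q dvd coeff F 0 * coeff G 0" using H by (metis coeff_mult_0)
  have nb: "\<not> (q dvd coeff F 0 \<and> q dvd coeff G 0)"
  proof
    assume "q dvd coeff F 0 \<and> q dvd coeff G 0"
    then have "q * q dvd coeff F 0 * coeff G 0" by (auto intro: mult_dvd_mono)
    moreover have "coeff H 0 = coeff F 0 * coeff G 0" using H by (metis coeff_mult_0)
    ultimately show False using c0 by (simp add: power2_eq_square)
  qed
  from d q have "q dvd coeff F 0 \<or> q dvd coeff G 0" using prime_dvd_mult_iff by blast
  then show ?thesis
  proof
    assume "q dvd coeff F 0"
    then have "degree G = 0" using nb low lead by (intro eisenstein_core[OF q H]) auto
    then show ?thesis by simp
  next
    assume "q dvd coeff G 0"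
    moreover have "G * F = H" using H by (simp add: mult.commute)
    ultimately have "degree F = 0" using nb low lead by (intro eisenstein_core[OF q, of G F H]) auto
    then show ?thesis by simp
  qed
qed


lemma degree_psi: "p > 0 \<Longrightarrow> degree (psi p) = p - 1"
proof -
  assume p: "p > 0"
  have "coeff (psi p) (p-1) \<noteq> 0" using p by (simp add: coeff_psi)
  moreover have "\<And>i. p - 1 < i \<Longrightarrow> coeff (psi p) i = 0" using p by (simp add: coeff_psi)
  ultimately show ?thesis by (metis le_antisym le_degree degree_le leI)
qed

lemma cycl_int_irred:
  fixes F G :: "int poly"
  assumes p: "prime p" and FG: "F * G = cycl p"
  shows "degree F = 0 \<or> degree G = 0"
proof -
  have p2: "p \<ge> 2" using p prime_ge_2_nat by blast
  have H: "pcompose F [:1,1:] * pcompose G [:1,1:] = psi p"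
    using FG pcompose_cycl[of p] by (metis pcompose_mult)
  have dp: "degree (psi p) = p - 1" using p2 degree_psi by simp
  have ip: "prime (int p)" using p by simp
  have "degree (pcompose F [:1,1:]) = 0 \<or> degree (pcompose G [:1,1:]) = 0"
  proof (rule eisenstein[OF ip H])
    show "degree (psi p) > 0" using dp p2 by simp
  next
    fix k assume "k < degree (psi p)"
    then have k: "k + 1 < p" using dp by simp
    have "p dvd (p choose (k+1))" using dvd_choose_prime[OF k _ _ p] p2 by simp
    then show "int p dvd coeff (psi p) k" using k by (simp add: coeff_psi)
  next
    show "\<not> int p dvd lead_coeff (psi p)" using dp p2 p
      by (simp add: coeff_psi)
  next
    have "coeff (psi p) 0 = int p" using p2 by (simp add: coeff_psi)
    moreover have "\<not> (int p)^2 dvd int p"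
    proof
      assume "(int p)^2 dvd int p"
      then have "(int p)^2 \<le> int p" using p2 by (intro zdvd_imp_le) auto
      moreover have "p * 2 \<le> p^2" using p2 by (simp add: power2_eq_square)
      ultimately show False using p2 by simp
    qed
    ultimately show "\<not> (int p)^2 dvd coeff (psi p) 0" by simp
  qed
  then show ?thesis by (simp add: degree_pcompose)
qed


lemma map_poly_of_int_mult: "map_poly (of_int :: int \<Rightarrow> 'a::comm_ring_1) (p * q) = map_poly of_int p * map_poly of_int q"
  by (rule poly_eqI) (simp add: coeff_map_poly coeff_mult of_int_sum)

lemma map_poly_of_int_smult: "map_poly (of_int :: int \<Rightarrow> 'a::comm_ring_1) (smult c p) = smult (of_int c) (map_poly of_int p)"
  by (rule poly_eqI) (simp add: coeff_map_poly)

lemma map_poly_of_rat_mult: "map_poly (of_rat :: rat \<Rightarrow> 'a::field_char_0) (p * q) = map_poly of_rat p * map_poly of_rat q"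
  by (rule poly_eqI) (simp add: coeff_map_poly coeff_mult of_rat_sum of_rat_mult)

lemma map_poly_of_rat_add: "map_poly (of_rat :: rat \<Rightarrow> 'a::field_char_0) (p + q) = map_poly of_rat p + map_poly of_rat q"
  by (rule poly_eqI) (simp add: coeff_map_poly of_rat_add)

lemma map_poly_of_rat_diff: "map_poly (of_rat :: rat \<Rightarrow> 'a::field_char_0) (p - q) = map_poly of_rat p - map_poly of_rat q"
  by (rule poly_eqI) (simp add: coeff_map_poly of_rat_diff)

lemma map_poly_of_int_cycl: "map_poly of_int (cycl p) = (cycl p :: 'a::comm_ring_1 poly)"
  by (rule poly_eqI) (simp add: coeff_map_poly coeff_cycl)

lemma clear_denom:
  fixes f :: "rat poly"
  obtains d :: int and F :: "int poly" where "d \<noteq> 0" "map_poly of_int F = smult (of_int d) f"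
proof -
  define d where "d = (\<Prod>i\<le>degree f. snd (quotient_of (coeff f i)))"
  have nz: "\<forall>i. snd (quotient_of (coeff f i)) \<noteq> 0" using quotient_of_denom_pos' by (metis less_irrefl)
  have d0: "d \<noteq> 0" unfolding d_def using nz by (simp add: prod_zero_iff)
  have ints: "of_int d * coeff f i \<in> \<int>" for i
  proof (cases "i \<le> degree f")
    case True
    obtain a b where ab: "quotient_of (coeff f i) = (a, b)" by force
    have b0: "b > 0" using ab quotient_of_denom_pos by blast
    have c: "coeff f i = of_int a / of_int b" using ab quotient_of_div by blast
    have "d = b * (\<Prod>j\<in>{..degree f} - {i}. snd (quotient_of (coeff f j)))"
      unfolding d_def using True ab by (subst prod.remove[of _ i]) auto
    then have "of_int d * coeff f i = of_int (a * (\<Prod>j\<in>{..degree f} - {i}. snd (quotient_of (coeff f j))))"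
      using b0 c by simp
    then show ?thesis by (metis Ints_of_int)
  next
    case False then show ?thesis by (simp add: coeff_eq_0)
  qed
  define F where "F = map_poly (\<lambda>x. \<lfloor>x\<rfloor>) (smult (of_int d) f)"
  have "map_poly of_int F = smult (of_int d) f"
  proof (rule poly_eqI)
    fix n
    have "coeff (map_poly of_int F) n = of_int \<lfloor>of_int d * coeff f n\<rfloor>"
      by (simp add: F_def coeff_map_poly)
    also have "\<dots> = of_int d * coeff f n" using ints[of n] by (metis Ints_cases floor_of_int)
    finally show "coeff (map_poly of_int F) n = coeff (smult (of_int d) f) n" by simp
  qed
  then show ?thesis using that d0 by blast
qed

lemma content_cycl: "p > 0 \<Longrightarrow> content (cycl p :: int poly) = 1"
proof -
  assume p: "p > 0"
  have "content (cycl p :: int poly) dvd coeff (cycl p) 0" by (rule content_dvd_coeff)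
  then have "content (cycl p :: int poly) dvd 1" using p by (simp add: coeff_cycl)
  then have "\<bar>content (cycl p :: int poly)\<bar> = 1" by simp
  moreover have "content (cycl p :: int poly) \<ge> 0"
    by (metis normalize_content abs_ge_zero normalize_int_def)
  ultimately show ?thesis by simp
qed

lemma cycl_rat_irred:
  fixes f g :: "rat poly"
  assumes p: "prime p" and fg: "f * g = cycl p"
  shows "degree f = 0 \<or> degree g = 0"
proof -
  have p0: "p > 0" using p prime_gt_0_nat by blast
  have cz: "(cycl p :: rat poly) \<noteq> 0"
  proof
    assume "(cycl p :: rat poly) = 0"
    then have "coeff (cycl p :: rat poly) 0 = 0" by simp
    then show False using p0 by (simp add: coeff_cycl)
  qed
  obtain d F where d: "d \<noteq> 0" and F: "map_poly of_int F = smult (of_int d) f" by (rule clear_denom)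
  obtain e G where e: "e \<noteq> 0" and G: "map_poly of_int G = smult (of_int e) g" by (rule clear_denom)
  have f0: "f \<noteq> 0" and g0: "g \<noteq> 0" using fg cz by auto
  have F0: "F \<noteq> 0" using F d f0 by auto
  have G0: "G \<noteq> 0" using G e g0 by auto
  have dF: "degree F = degree f"
  proof -
    have "degree (map_poly (of_int :: int \<Rightarrow> rat) F) = degree F" by (rule degree_map_poly) simp
    then show ?thesis using F d by simp
  qed
  have dG: "degree G = degree g"
  proof -
    have "degree (map_poly (of_int :: int \<Rightarrow> rat) G) = degree G" by (rule degree_map_poly) simp
    then show ?thesis using G e by simp
  qed
  define P where "P = primitive_part F * primitive_part G"
  have cP: "content P = 1" using F0 G0 by (simp add: P_def content_mult)
  have FG: "F * G = smult (content F * content G) P"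
    unfolding P_def by (metis content_times_primitive_part mult_smult_left mult_smult_right smult_smult)
  have "map_poly (of_int :: int \<Rightarrow> rat) (smult (d * e) (cycl p)) = smult (of_int (d*e)) (cycl p)"
    by (simp add: map_poly_of_int_smult map_poly_of_int_cycl)
  also have "\<dots> = map_poly of_int F * map_poly of_int G"
    using F G fg[symmetric] by (simp add: mult.commute mult.left_commute)
  also have "\<dots> = map_poly of_int (smult (content F * content G) P)"
    by (simp add: map_poly_of_int_mult FG[symmetric])
  finally have eq0: "map_poly (of_int :: int \<Rightarrow> rat) (smult (d * e) (cycl p)) = map_poly of_int (smult (content F * content G) P)" .
  have eq: "smult (d * e) (cycl p) = smult (content F * content G) P"
  proof (rule poly_eqI)
    fix n
    from arg_cong[OF eq0, of "\<lambda>q. coeff q n"]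
    show "coeff (smult (d * e) (cycl p)) n = coeff (smult (content F * content G) P) n"
      by (simp only: coeff_map_poly of_int_0 of_int_eq_iff)
  qed
  have "content (smult (d * e) (cycl p :: int poly)) = content (smult (content F * content G) P)"
    using eq by simp
  then have nab: "normalize (d * e) = normalize (content F * content G)"
    using cP content_cycl[OF p0] by simp
  have ab0: "d * e \<noteq> 0" using d e by simp
  have "degree (primitive_part F) = 0 \<or> degree (primitive_part G) = 0"
  proof (cases "d * e = content F * content G")
    case True
    then have "cycl p = P" using eq ab0 by (metis smult_cancel)
    then show ?thesis using cycl_int_irred[OF p] unfolding P_def by metis
  next
    case False
    have "\<bar>d * e\<bar> = \<bar>content F * content G\<bar>" using nab by (simp only: normalize_int_def)
    then have "d * e = - (content F * content G)" using False by (metis abs_eq_iff)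
    then have "smult (d*e) (cycl p) = smult (d * e) (smult (-1) P)" using eq by simp
    then have "cycl p = smult (-1) P" using ab0 by (metis smult_cancel)
    then have "cycl p = primitive_part F * smult (-1) (primitive_part G)" using P_def by simp
    then have "degree (primitive_part F) = 0 \<or> degree (smult (-1) (primitive_part G)) = 0"
      using cycl_int_irred[OF p] by metis
    then show ?thesis by simp
  qed
  then show ?thesis using dF dG by simp
qed


lemma degree_cycl: "p > 0 \<Longrightarrow> degree (cycl p :: 'a::comm_ring_1 poly) = p - 1"
proof -
  assume p: "p > 0"
  have "coeff (cycl p :: 'a poly) (p-1) \<noteq> 0" using p by (simp add: coeff_cycl)
  moreover have "\<And>i. p - 1 < i \<Longrightarrow> coeff (cycl p :: 'a poly) i = 0" using p by (simp add: coeff_cycl)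
  ultimately show ?thesis by (metis le_antisym le_degree degree_le)
qed

lemma map_poly_of_rat_cycl: "map_poly (of_rat :: rat \<Rightarrow> 'a::field_char_0) (cycl p) = cycl p"
  by (rule poly_eqI) (simp add: coeff_map_poly coeff_cycl)

lemma map_poly_of_rat_smult: "map_poly (of_rat :: rat \<Rightarrow> 'a::field_char_0) (smult c q) = smult (of_rat c) (map_poly of_rat q)"
  by (rule poly_eqI) (simp add: coeff_map_poly of_rat_mult)

lemma map_poly_of_rat_monom: "map_poly (of_rat :: rat \<Rightarrow> 'a::field_char_0) (monom c i) = monom (of_rat c) i"
  by (rule poly_eqI) (simp add: coeff_map_poly coeff_monom)

lemma map_poly_of_rat_sum: "map_poly (of_rat :: rat \<Rightarrow> 'a::field_char_0) (\<Sum>i\<in>A. f i) = (\<Sum>i\<in>A. map_poly of_rat (f i))"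
  by (rule poly_eqI) (simp add: coeff_map_poly coeff_sum of_rat_sum)

locale cyc =
  fixes p :: nat and z :: complex
  assumes prime: "prime p" and zp: "z ^ p = 1" and z1: "z \<noteq> 1"
begin

lemma p2: "p \<ge> 2" using prime prime_ge_2_nat by blast
lemma p0: "p > 0" using p2 by simp

lemma z0: "z \<noteq> 0" using zp p0 by (metis power_0_left zero_neq_one not_gr0)

lemma z_pow_eq_1: "z ^ j = 1 \<longleftrightarrow> p dvd j"
proof
  assume "p dvd j" then obtain k where "j = p * k" by blast
  then show "z ^ j = 1" by (simp add: power_mult zp)
next
  assume zj: "z ^ j = 1"
  show "p dvd j"
  proof (rule ccontr)
    assume nd: "\<not> p dvd j"
    then have j0: "j \<noteq> 0" by (metis dvd_0_right)
    have "coprime p j" using prime nd by (simp add: prime_imp_coprime)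
    then have g: "gcd j p = 1" by (metis coprime_iff_gcd_eq_1 gcd.commute)
    obtain x y where xy: "j * x = p * y + gcd j p" using bezout_nat[OF j0] by blast
    have "z ^ (j * x) = 1" by (simp add: power_mult zj)
    moreover have "z ^ (j * x) = z ^ (p * y) * z" using xy g by (simp add: power_add)
    moreover have "z ^ (p * y) = 1" by (simp add: power_mult zp)
    ultimately show False using z1 by simp
  qed
qed

lemma sum_z_pow: "(\<Sum>i<p. (z ^ j) ^ i) = (if p dvd j then of_nat p else 0)"
proof (cases "p dvd j")
  case True
  then have "z ^ j = 1" using z_pow_eq_1 by simp
  then show ?thesis using True by simp
next
  case False
  then have ne: "z ^ j \<noteq> 1" using z_pow_eq_1 by simp
  have "(z ^ j) ^ p = (z ^ p) ^ j" by (metis power_mult mult.commute)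
  then have "(z ^ j) ^ p - 1 = 0" by (simp add: zp)
  then have "(z ^ j - 1) * (\<Sum>i<p. (z ^ j) ^ i) = 0" by (simp add: power_diff_1_eq)
  then show ?thesis using ne False by simp
qed

lemma poly_cycl_z: "poly (cycl p) z = 0"
  using sum_z_pow[of 1] p2 by (simp add: poly_cycl)

lemma K0:
  fixes C :: "rat poly"
  assumes dC: "degree C < p - 1" and C: "poly (map_poly of_rat C) z = 0"
  shows "C = 0"
proof (rule ccontr)
  assume C0: "C \<noteq> 0"
  define P where "P = (\<lambda>r::rat poly. r \<noteq> 0 \<and> poly (map_poly of_rat r) z = 0)"
  have "P C" using C0 C by (simp add: P_def)
  then obtain m where Pm: "P m" and mmin: "\<And>r. P r \<Longrightarrow> degree m \<le> degree r"
    using ex_has_least_nat[of P C degree] by blast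
  have m0: "m \<noteq> 0" and mz: "poly (map_poly of_rat m) z = 0" using Pm by (auto simp: P_def)
  define r where "r = cycl p mod m"
  have rr: "r = cycl p - (cycl p div m) * m" unfolding r_def by (rule minus_div_mult_eq_mod[symmetric])
  have "map_poly (of_rat :: rat \<Rightarrow> complex) r = cycl p - map_poly of_rat (cycl p div m) * map_poly of_rat m"
    by (simp only: rr map_poly_of_rat_diff map_poly_of_rat_mult map_poly_of_rat_cycl)
  then have "poly (map_poly of_rat r) z = 0"
    by (simp add: poly_cycl_z mz)
  then have r0: "r = 0"
  proof -
    assume rz: "poly (map_poly of_rat r) z = 0"
    show "r = 0"
    proof (rule ccontr)
      assume "r \<noteq> 0"
      then have "degree r < degree m" using m0 by (simp add: r_def degree_mod_less')
      moreover have "P r" using \<open>r \<noteq> 0\<close> rz by (simp add: P_def)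
      ultimately show False using mmin by fastforce
    qed
  qed
  have cz: "(cycl p :: rat poly) \<noteq> 0"
  proof
    assume "(cycl p :: rat poly) = 0"
    then have "coeff (cycl p :: rat poly) 0 = 0" by simp
    then show False using p0 by (simp add: coeff_cycl)
  qed
  have fac: "(cycl p div m) * m = cycl p" using r0 unfolding r_def by (metis add.right_neutral div_mult_mod_eq)
  then have "degree (cycl p div m) = 0 \<or> degree m = 0" by (rule cycl_rat_irred[OF prime])
  then show False
  proof
    assume "degree m = 0"
    then obtain c where "m = [:c:]" by (metis degree_eq_zeroE)
    moreover have "map_poly (of_rat :: rat \<Rightarrow> complex) [:c:] = [:of_rat c:]"
      by (rule poly_eqI) (simp add: coeff_map_poly coeff_pCons split: nat.split)
    ultimately show False using m0 mz by simp
  next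
    assume d: "degree (cycl p div m) = 0"
    have "cycl p div m \<noteq> 0" using fac cz by auto
    then have "degree (cycl p :: rat poly) = degree m" using fac[symmetric] m0 d
      by (metis degree_mult_eq add_0)
    moreover have "degree m \<le> degree C" using mmin \<open>P C\<close> by blast
    ultimately show False using dC degree_cycl[OF p0, where 'a=rat] by simp
  qed
qed

lemma vanish_conj:
  fixes r :: "rat poly"
  assumes r: "poly (map_poly of_rat r) z = 0" and j: "\<not> p dvd j"
  shows "poly (map_poly of_rat r) (z ^ j) = 0"
proof -
  have cz: "(cycl p :: rat poly) \<noteq> 0"
  proof
    assume "(cycl p :: rat poly) = 0"
    then have "coeff (cycl p :: rat poly) 0 = 0" by simp
    then show False using p0 by (simp add: coeff_cycl)
  qed
  define s where "s = r mod cycl p"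
  have ss: "s = r - (r div cycl p) * cycl p" unfolding s_def by (rule minus_div_mult_eq_mod[symmetric])
  have "map_poly (of_rat :: rat \<Rightarrow> complex) s = map_poly of_rat r - map_poly of_rat (r div cycl p) * cycl p"
    by (simp only: ss map_poly_of_rat_diff map_poly_of_rat_mult map_poly_of_rat_cycl)
  then have sz: "poly (map_poly of_rat s) z = 0"
    by (simp add: poly_cycl_z r)
  have "s = 0"
  proof (rule ccontr)
    assume "s \<noteq> 0"
    then have "degree s < degree (cycl p :: rat poly)" using cz unfolding s_def by (rule degree_mod_less'[rotated])
    then have "degree s < p - 1" using degree_cycl[OF p0, where 'a=rat] by simp
    then show False using K0 sz \<open>s \<noteq> 0\<close> by blast
  qed
  define q where "q = r div cycl p"
  have rq: "r = q * cycl p" using \<open>s = 0\<close> unfolding s_def q_def by (metis add.right_neutral div_mult_mod_eq)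
  have "map_poly (of_rat :: rat \<Rightarrow> complex) r = map_poly of_rat q * cycl p"
    by (simp only: rq map_poly_of_rat_mult map_poly_of_rat_cycl)
  then have "poly (map_poly of_rat r) (z ^ j) = poly (map_poly of_rat q) (z^j) * poly (cycl p) (z ^ j)"
    by simp
  also have "poly (cycl p) (z ^ j) = 0" using sum_z_pow[of j] j by (simp add: poly_cycl)
  finally show ?thesis by simp
qed

lemma K:
  fixes c :: "nat \<Rightarrow> int"
  assumes s: "(\<Sum>i<p. of_int (c i) * z ^ i) = 0"
  shows "\<forall>i<p. c i = c 0"
proof -
  define C :: "rat poly" where "C = (\<Sum>i<p. monom (of_int (c i)) i) - smult (of_int (c (p-1))) (cycl p)"
  have coeffC: "coeff C k = (if k < p then of_int (c k) - of_int (c (p-1)) else 0)" for k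
    by (simp add: C_def coeff_sum coeff_cycl coeff_monom)
  have "degree C \<le> p - 2"
  proof (rule degree_le, intro allI impI)
    fix i assume i: "p - 2 < i"
    show "coeff C i = 0"
    proof (cases "i < p")
      case True
      then have "i = p - 1" using i p2 by simp
      then show ?thesis by (simp add: coeffC)
    qed (simp add: coeffC)
  qed
  then have dC: "degree C < p - 1" using p2 by simp
  have "poly (map_poly of_rat C) z = (\<Sum>i<p. of_int (c i) * z ^ i) - of_int (c (p-1)) * poly (cycl p) z"
    by (simp add: C_def map_poly_of_rat_diff map_poly_of_rat_sum map_poly_of_rat_monom
        map_poly_of_rat_smult map_poly_of_rat_cycl poly_sum poly_monom)
  then have "poly (map_poly of_rat C) z = 0" using s poly_cycl_z by simp
  then have "C = 0" using K0 dC by blast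
  have all: "\<forall>i<p. c i = c (p - 1)"
  proof (intro allI impI)
    fix i assume "i < p"
    then have "of_int (c i) - of_int (c (p-1)) = (0::rat)" using coeffC[of i] \<open>C = 0\<close> by simp
    then show "c i = c (p-1)" by simp
  qed
  have c0: "c 0 = c (p - 1)" using all p0 by blast
  show ?thesis
  proof (intro allI impI)
    fix i assume "i < p"
    then have "c i = c (p - 1)" using all by blast
    then show "c i = c 0" using c0 by (simp only:)
  qed
qed

end


context cyc begin

lemma poly_of_rat_int_sum:
  "poly (map_poly (of_rat :: rat \<Rightarrow> complex) (\<Sum>i<p. monom (of_int (c i)) i)) x = (\<Sum>i<p. of_int (c i) * x ^ i)"
  by (simp add: map_poly_of_rat_sum map_poly_of_rat_monom poly_sum poly_monom)

lemma inner_sum: "i < p \<Longrightarrow> (\<Sum>j\<in>{1..<p}. (z ^ i) ^ j) = (if i = 0 then of_nat p else 0) - 1"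
proof -
  assume i: "i < p"
  have "{..<p} = insert 0 {1..<p}" using p0 by auto
  then have "(\<Sum>j<p. (z ^ i) ^ j) = 1 + (\<Sum>j\<in>{1..<p}. (z ^ i) ^ j)" by simp
  moreover have "(\<Sum>j<p. (z ^ i) ^ j) = (if i = 0 then of_nat p else 0)"
    using sum_z_pow[of i] i by (auto dest: dvd_imp_le)
  ultimately show ?thesis by (simp add: algebra_simps)
qed

lemma trace_sum:
  fixes c :: "nat \<Rightarrow> int"
  shows "(\<Sum>j\<in>{1..<p}. \<Sum>i<p. of_int (c i) * (z ^ j) ^ i) = of_int (int p * c 0 - (\<Sum>i<p. c i))"
proof -
  have "(\<Sum>j\<in>{1..<p}. \<Sum>i<p. of_int (c i) * (z ^ j) ^ i) = (\<Sum>i<p. of_int (c i) * (\<Sum>j\<in>{1..<p}. (z ^ i) ^ j))"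
    by (subst sum.swap) (simp add: sum_distrib_left power_mult[symmetric] mult.commute)
  also have "\<dots> = (\<Sum>i<p. of_int (c i) * ((if i = 0 then of_nat p else 0) - 1))"
  proof (rule sum.cong)
    fix i assume "i \<in> {..<p}"
    then show "of_int (c i) * (\<Sum>j\<in>{1..<p}. (z ^ i) ^ j) = of_int (c i) * ((if i = 0 then of_nat p else 0) - 1)"
      using inner_sum[of i] by simp
  qed simp
  also have "\<dots> = (\<Sum>i<p. (if i = 0 then of_int (c i) * of_nat p else 0) - of_int (c i))"
    by (rule sum.cong) (auto simp: algebra_simps)
  also have "\<dots> = (\<Sum>i<p. (if i = 0 then of_int (c i) * of_nat p else 0)) - (\<Sum>i<p. of_int (c i))"
    by (rule sum_subtractf)
  also have "\<dots> = of_int (c 0) * of_nat p - (\<Sum>i<p. of_int (c i))"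
    using p0 by (simp add: sum.delta)
  finally show ?thesis by (simp add: of_int_sum algebra_simps)
qed

lemma cyc_trace_eq:
  fixes c :: "nat \<Rightarrow> int"
  shows "cyc_trace p z (\<Sum>i<p. of_int (c i) * z ^ i) = of_int (int p * c 0 - (\<Sum>i<p. c i))"
proof -
  define q0 :: "rat poly" where "q0 = (\<Sum>i<p. monom (of_int (c i)) i)"
  have q0: "poly (map_poly of_rat q0) x = (\<Sum>i<p. of_int (c i) * x ^ i)" for x :: complex
    unfolding q0_def by (rule poly_of_rat_int_sum)
  show ?thesis unfolding cyc_trace_def
  proof (rule the_equality)
    show "\<exists>q :: rat poly. poly (map_poly of_rat q) z = (\<Sum>i<p. of_int (c i) * z ^ i) \<and>
        of_int (int p * c 0 - (\<Sum>i<p. c i)) = (\<Sum>j\<in>{1..<p}. poly (map_poly of_rat q) (z ^ j))"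
    proof (intro exI[of _ q0] conjI)
      show "poly (map_poly of_rat q0) z = (\<Sum>i<p. of_int (c i) * z ^ i)" by (rule q0)
      show "of_int (int p * c 0 - (\<Sum>i<p. c i)) = (\<Sum>j\<in>{1..<p}. poly (map_poly of_rat q0) (z ^ j))"
        unfolding q0 by (rule trace_sum[symmetric])
    qed
  next
    fix t assume "\<exists>q :: rat poly. poly (map_poly of_rat q) z = (\<Sum>i<p. of_int (c i) * z ^ i) \<and>
        t = (\<Sum>j\<in>{1..<p}. poly (map_poly of_rat q) (z ^ j))"
    then obtain q :: "rat poly" where qz: "poly (map_poly of_rat q) z = (\<Sum>i<p. of_int (c i) * z ^ i)"
      and t: "t = (\<Sum>j\<in>{1..<p}. poly (map_poly of_rat q) (z ^ j))" by blast
    have "poly (map_poly of_rat (q - q0)) z = 0" using qz q0 by (simp add: map_poly_of_rat_diff)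
    then have "poly (map_poly of_rat (q - q0)) (z ^ j) = 0" if "j \<in> {1..<p}" for j
      using that by (intro vanish_conj) (auto dest: dvd_imp_le)
    then have "poly (map_poly of_rat q) (z ^ j) = poly (map_poly of_rat q0) (z ^ j)" if "j \<in> {1..<p}" for j
      using that by (simp add: map_poly_of_rat_diff)
    then have "t = (\<Sum>j\<in>{1..<p}. poly (map_poly of_rat q0) (z ^ j))" using t by simp
    also have "\<dots> = of_int (int p * c 0 - (\<Sum>i<p. c i))" by (simp only: q0 trace_sum)
    finally show "t = of_int (int p * c 0 - (\<Sum>i<p. c i))" .
  qed
qed

end


context cyc begin

lemma z_pow_mod: "z ^ n = z ^ (n mod p)"
proof -
  have "z ^ n = z ^ (n mod p + p * (n div p))" by simp
  also have "\<dots> = z ^ (n mod p)" by (simp only: power_add power_mult zp power_one mult_1_right)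
  finally show ?thesis .
qed

lemma zpowi_mod: "z powi x = z powi (x mod int p)"
proof -
  have "z powi x = z powi (x mod int p + int p * (x div int p))" by simp
  also have "\<dots> = z powi (x mod int p) * (z powi int p) powi (x div int p)"
    using power_int_add[of z "x mod int p" "int p * (x div int p)"] power_int_mult[of z "int p" "x div int p"] z0
    by simp
  also have "z powi int p = 1" by (simp add: zp)
  finally show ?thesis by simp
qed

lemma zpowi_nat: "0 \<le> u \<Longrightarrow> z powi u = z ^ nat u"
  by (metis power_int_of_nat int_nat_eq)

lemma group_mod:
  fixes g :: "int \<Rightarrow> 'b::comm_semiring_1" and f :: "'c \<Rightarrow> int"
  assumes S: "finite S"
  shows "(\<Sum>s\<in>S. g (f s mod int p)) = (\<Sum>i<p. of_nat (card {s\<in>S. f s mod int p = int i}) * g (int i))"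
proof -
  define h where "h s = nat (f s mod int p)" for s
  have hS: "h ` S \<subseteq> {..<p}" using p0 by (auto simp: h_def nat_less_iff)
  have hv: "f s mod int p = int (h s)" for s using p0 by (simp add: h_def)
  have "(\<Sum>s\<in>S. g (f s mod int p)) = (\<Sum>y<p. \<Sum>s\<in>{x\<in>S. h x = y}. g (f s mod int p))"
    using sum.group[OF S _ hS, of "\<lambda>s. g (f s mod int p)"] by simp
  also have "\<dots> = (\<Sum>i<p. of_nat (card {s\<in>S. f s mod int p = int i}) * g (int i))"
  proof (rule sum.cong)
    fix y assume "y \<in> {..<p}"
    have e: "{x\<in>S. h x = y} = {s\<in>S. f s mod int p = int y}" using hv by auto
    have "(\<Sum>s\<in>{x\<in>S. h x = y}. g (f s mod int p)) = (\<Sum>s\<in>{x\<in>S. h x = y}. g (int y))"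
      by (rule sum.cong) (auto simp: hv)
    then show "(\<Sum>s\<in>{x\<in>S. h x = y}. g (f s mod int p)) = of_nat (card {s\<in>S. f s mod int p = int y}) * g (int y)"
      using e by simp
  qed simp
  finally show ?thesis .
qed

lemma sum_zpowi:
  assumes S: "finite S"
  shows "(\<Sum>s\<in>S. z powi (f s)) = (\<Sum>i<p. of_nat (card {s\<in>S. f s mod int p = int i}) * z ^ i)"
proof -
  have "(\<Sum>s\<in>S. z powi (f s)) = (\<Sum>s\<in>S. z powi (f s mod int p))"
    by (rule sum.cong) (simp_all add: zpowi_mod[of "f _"])
  also have "\<dots> = (\<Sum>i<p. of_nat (card {s\<in>S. f s mod int p = int i}) * z powi (int i))"
    by (rule group_mod[OF S])
  finally show ?thesis by simp
qed

lemma card_group: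
  assumes S: "finite S"
  shows "card S = (\<Sum>i<p. card {s\<in>S. f s mod int p = int i})"
  using group_mod[OF S, of "\<lambda>_. (1::nat)" f] by simp

lemma bij_shift: "bij_betw (\<lambda>i. (i + k) mod p) {..<p} {..<p}"
proof -
  have inj: "inj_on (\<lambda>i. (i + k) mod p) {..<p}"
  proof (rule inj_onI)
    fix x y assume x: "x \<in> {..<p}" and y: "y \<in> {..<p}" and e: "(x + k) mod p = (y + k) mod p"
    then have "[x + k = y + k] (mod p)" by (simp add: cong_def)
    then have "[x = y] (mod p)" by (simp add: cong_add_rcancel_nat)
    then show "x = y" using x y cong_less_modulus_unique_nat by auto
  qed
  moreover have sub: "(\<lambda>i. (i + k) mod p) ` {..<p} \<subseteq> {..<p}" using p0 by auto
  moreover have "(\<lambda>i. (i + k) mod p) ` {..<p} = {..<p}"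
    using endo_inj_surj[OF _ sub inj] by simp
  ultimately show ?thesis by (simp add: bij_betw_def)
qed

lemma sum_shift: "(\<Sum>i<p. g ((i + k) mod p)) = (\<Sum>j<p. g j)"
  using sum.reindex_bij_betw[OF bij_shift, of g k] by simp

lemma shift:
  fixes c :: "nat \<Rightarrow> int"
  shows "(\<Sum>j<p. of_int (c j) * z ^ j) * z powi (- int k) = (\<Sum>i<p. of_int (c ((i + k) mod p)) * z ^ i)"
proof -
  have "(\<Sum>i<p. of_int (c ((i + k) mod p)) * z ^ i) * z ^ k = (\<Sum>i<p. of_int (c ((i + k) mod p)) * z ^ ((i + k) mod p))"
    by (simp add: sum_distrib_right mult.assoc power_add[symmetric] z_pow_mod[of "_ + k"])
  also have "\<dots> = (\<Sum>j<p. of_int (c j) * z ^ j)"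
    by (rule sum_shift)
  finally have e: "(\<Sum>j<p. of_int (c j) * z ^ j) = (\<Sum>i<p. of_int (c ((i + k) mod p)) * z ^ i) * z ^ k" by simp
  have "z ^ k * z powi (- int k) = 1" using z0 by (simp add: power_int_minus)
  then show ?thesis unfolding e by (simp add: mult.assoc)
qed

lemma trace_shift:
  fixes c :: "nat \<Rightarrow> int"
  assumes k: "k < p"
  shows "cyc_trace p z ((\<Sum>j<p. of_int (c j) * z ^ j) * z powi (- int k)) = of_int (int p * c k - (\<Sum>j<p. c j))"
  unfolding shift cyc_trace_eq using k by (simp add: sum_shift[of c k])

lemma cnj_z: "cnj z = inverse z"
proof -
  have "norm z ^ p = 1" using zp by (metis norm_one norm_power)
  then have "norm z = 1" using power_eq_imp_eq_base[of "norm z" p 1] p0 by simp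
  then have "z * cnj z = 1" using complex_norm_square[of z] by simp
  then show ?thesis by (metis inverse_unique)
qed

lemma norm_sq_sum:
  assumes A: "finite A" "A \<subseteq> {0..}"
  shows "complex_of_real ((cmod (\<Sum>a\<in>A. z powi a))\<^sup>2) = (\<Sum>x\<in>A \<times> A. z powi (fst x - snd x))"
proof -
  have c: "cnj (z powi b) = z powi (- b)" for b
    by (simp add: cnj_z power_int_minus power_int_inverse)
  have "complex_of_real ((cmod (\<Sum>a\<in>A. z powi a))\<^sup>2) = (\<Sum>a\<in>A. z powi a) * cnj (\<Sum>a\<in>A. z powi a)"
    by (rule complex_norm_square)
  also have "cnj (\<Sum>a\<in>A. z powi a) = (\<Sum>b\<in>A. z powi (- b))"
    by (simp only: cnj_sum c)
  also have "(\<Sum>a\<in>A. z powi a) * (\<Sum>b\<in>A. z powi (- b)) = (\<Sum>a\<in>A. \<Sum>b\<in>A. z powi a * z powi (- b))"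
    unfolding sum_distrib_right by (simp only: sum_distrib_left)
  also have "\<dots> = (\<Sum>a\<in>A. \<Sum>b\<in>A. z powi (a - b))"
    using z0 by (simp add: power_int_add[symmetric])
  also have "\<dots> = (\<Sum>x\<in>A \<times> A. z powi (fst x - snd x))"
    by (simp add: sum.cartesian_product case_prod_beta)
  finally show ?thesis .
qed

end


lemma qr_image:
  fixes p :: nat
  assumes p: "prime p" and p2: "p > 2"
  shows "quad_res_set p = (\<lambda>x. x^2 mod int p) ` {1..(int p - 1) div 2}"
proof -
  have ip: "prime (int p)" using p by simp
  have odd: "odd p" using prime_odd_nat[OF p p2] .
  have M: "2 * ((int p - 1) div 2) = int p - 1" using odd by (auto elim: oddE)
  show ?thesis
  proof
    show "quad_res_set p \<subseteq> (\<lambda>x. x^2 mod int p) ` {1..(int p - 1) div 2}"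
    proof
      fix r assume "r \<in> quad_res_set p"
      then have r: "1 \<le> r" "r < int p" and "QuadRes (int p) r" by (auto simp: quad_res_set_def)
      then obtain y where y: "[y^2 = r] (mod int p)" by (auto simp: QuadRes_def)
      define w where "w = y mod int p"
      have w: "0 \<le> w" "w < int p" using p2 by (auto simp: w_def)
      have "[w = y] (mod int p)" by (simp add: w_def cong_def)
      then have wr: "[w^2 = r] (mod int p)" using y by (meson cong_pow cong_trans)
      have w0: "w \<noteq> 0"
      proof
        assume "w = 0"
        then have "[0 = r] (mod int p)" using wr by simp
        then show False using r by (auto simp: cong_def)
      qed
      show "r \<in> (\<lambda>x. x^2 mod int p) ` {1..(int p - 1) div 2}"
      proof (cases "w \<le> (int p - 1) div 2")
        case True
        have "r = w^2 mod int p" using wr r by (simp add: cong_def)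
        then show ?thesis using True w w0 by force
      next
        case False
        define x where "x = int p - w"
        have "[x = - w] (mod int p)" by (simp add: x_def cong_def)
        then have "[x^2 = (- w)^2] (mod int p)" by (rule cong_pow)
        then have "[x^2 = r] (mod int p)" using wr by (simp add: cong_trans)
        then have "r = x^2 mod int p" using r by (simp add: cong_def)
        moreover have "x \<in> {1..(int p - 1) div 2}" using False w M by (auto simp: x_def)
        ultimately show ?thesis by force
      qed
    qed
  next
    show "(\<lambda>x. x^2 mod int p) ` {1..(int p - 1) div 2} \<subseteq> quad_res_set p"
    proof
      fix r assume "r \<in> (\<lambda>x. x^2 mod int p) ` {1..(int p - 1) div 2}"
      then obtain x where x: "1 \<le> x" "x \<le> (int p - 1) div 2" and rx: "r = x^2 mod int p" by auto
      have "\<not> int p dvd x" using x M by (auto dest: zdvd_imp_le)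
      then have "\<not> int p dvd x^2" using ip by (simp add: prime_dvd_power_iff)
      then have "r \<noteq> 0" using rx by (simp add: dvd_eq_mod_eq_0)
      moreover have "0 \<le> r" "r < int p" using rx p2 by auto
      moreover have "QuadRes (int p) r" unfolding QuadRes_def rx by (auto simp: cong_def)
      ultimately show "r \<in> quad_res_set p" by (auto simp: quad_res_set_def)
    qed
  qed
qed

lemma qr_inj:
  fixes p :: nat
  assumes p: "prime p" and p2: "p > 2"
  shows "inj_on (\<lambda>x. x^2 mod int p) {1..(int p - 1) div 2}"
proof (rule inj_onI)
  have ip: "prime (int p)" using p by simp
  have odd: "odd p" using prime_odd_nat[OF p p2] .
  have M: "2 * ((int p - 1) div 2) = int p - 1" using odd by (auto elim: oddE)
  fix x y assume x: "x \<in> {1..(int p - 1) div 2}" and y: "y \<in> {1..(int p - 1) div 2}"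
    and e: "x^2 mod int p = y^2 mod int p"
  then have "int p dvd x^2 - y^2" by (simp add: mod_eq_dvd_iff)
  also have "x^2 - y^2 = (x - y) * (x + y)" by (simp add: power2_eq_square algebra_simps)
  finally have "int p dvd (x - y) \<or> int p dvd (x + y)" using ip by (simp add: prime_dvd_mult_iff)
  moreover have "\<not> int p dvd (x + y)" using x y M by (auto dest: zdvd_imp_le)
  ultimately have d: "int p dvd (x - y)" by simp
  show "x = y"
  proof (rule ccontr)
    assume "x \<noteq> y"
    then have a: "\<bar>x - y\<bar> > 0" by simp
    have "int p dvd \<bar>x - y\<bar>" using d by simp
    then have "int p \<le> \<bar>x - y\<bar>" using a by (rule zdvd_imp_le)
    then show False using x y M by auto
  qed
qed

lemma card_qr:
  fixes p :: nat
  assumes p: "prime p" and p2: "p > 2"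
  shows "2 * card (quad_res_set p) = p - 1"
proof -
  have odd: "odd p" using prime_odd_nat[OF p p2] .
  have M: "2 * ((int p - 1) div 2) = int p - 1" using odd by (auto elim: oddE)
  have "card (quad_res_set p) = card {1..(int p - 1) div 2}"
    using qr_image[OF p p2] qr_inj[OF p p2] by (simp add: card_image)
  also have "\<dots> = nat ((int p - 1) div 2)" by simp
  finally have "int (2 * card (quad_res_set p)) = int p - 1" using M p2 by simp
  then show ?thesis using p2 by simp
qed

lemma qr_2: "quad_res_set 2 = {1}"
proof -
  have "QuadRes 2 1" unfolding QuadRes_def by (rule exI[of _ 1]) simp
  then show ?thesis by (auto simp: quad_res_set_def)
qed


context cyc begin

lemma coef_A:
  assumes A: "A \<subseteq> {0..<int p}" and i: "i < p"
  shows "card {a\<in>A. a mod int p = int i} = (if int i \<in> A then 1 else 0)"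
proof -
  have "{a\<in>A. a mod int p = int i} = A \<inter> {int i}" using A by auto
  then show ?thesis by auto
qed

lemma alpha_coeffs:
  assumes A: "A \<subseteq> {0..<int p}"
  shows "(\<Sum>a\<in>A. z powi a) = (\<Sum>j<p. of_int (if int j \<in> A then 1 else 0) * z ^ j)"
proof -
  have fA: "finite A" using A finite_subset by blast
  have "(\<Sum>a\<in>A. z powi a) = (\<Sum>j<p. of_nat (card {a\<in>A. a mod int p = int j}) * z ^ j)"
    using sum_zpowi[OF fA, of "\<lambda>a. a"] by simp
  also have "\<dots> = (\<Sum>j<p. of_int (if int j \<in> A then 1 else 0) * z ^ j)"
    by (rule sum.cong) (simp_all add: coef_A[OF A])
  finally show ?thesis .
qed

lemma card_A_sum:
  assumes A: "A \<subseteq> {0..<int p}"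
  shows "(\<Sum>j<p. (if int j \<in> A then 1 else 0 :: int)) = int (card A)"
proof -
  have fA: "finite A" using A finite_subset by blast
  have "card A = (\<Sum>i<p. card {a\<in>A. a mod int p = int i})" by (rule card_group[OF fA])
  also have "\<dots> = (\<Sum>i<p. (if int i \<in> A then 1 else 0))"
    by (rule sum.cong) (simp_all add: coef_A[OF A])
  finally have "int (card A) = (\<Sum>i<p. int (if int i \<in> A then 1 else 0))" by (simp add: of_nat_sum)
  also have "\<dots> = (\<Sum>i<p. (if int i \<in> A then 1 else 0))" by (rule sum.cong) auto
  finally show ?thesis by simp
qed

lemma zpowi_neg_mod: "z powi (- k) = z powi (- int (nat (k mod int p)))"
proof -
  have "int (nat (k mod int p)) = k mod int p" using p0 by simp
  then have "(- int (nat (k mod int p))) mod int p = (- k) mod int p" by (simp add: mod_minus_eq)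
  then show ?thesis by (metis zpowi_mod)
qed

lemma trace_A:
  assumes A: "A \<subseteq> {0..<int p}"
  shows "cyc_trace p z ((\<Sum>a\<in>A. z powi a) * z powi (- k)) \<in>
           {of_int (- int (card A)), of_int (int p - int (card A))}"
proof -
  define k' where "k' = nat (k mod int p)"
  have k': "k' < p" using p0 by (simp add: k'_def nat_less_iff)
  have "cyc_trace p z ((\<Sum>a\<in>A. z powi a) * z powi (- k)) =
      cyc_trace p z ((\<Sum>j<p. of_int (if int j \<in> A then 1 else 0) * z ^ j) * z powi (- int k'))"
    by (simp only: alpha_coeffs[OF A] zpowi_neg_mod[of k] k'_def)
  also have "\<dots> = of_int (int p * (if int k' \<in> A then 1 else 0) - int (card A))"
    by (simp only: trace_shift[OF k'] card_A_sum[OF A])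
  finally show ?thesis by simp
qed

lemma forward:
  assumes Asub: "A \<subseteq> Fp p" and de: "diff_exact p A (quad_res_set p)"
  shows "\<exists>n :: int. int p = 2 * n * (n - 1) + 1 \<and>
       (\<exists>\<alpha> \<in> cyc_int p z.
          complex_of_real ((cmod \<alpha>)\<^sup>2) = of_int n + gauss_period p z \<and>
          (\<forall>k :: int. cyc_trace p z (\<alpha> * z powi (- k)) \<in> {of_int (- n), of_int (int p - n)}))"
proof -
  define R where "R = quad_res_set p"
  have A: "A \<subseteq> {0..<int p}" using Asub by (simp add: Fp_def)
  have fA: "finite A" using A finite_subset by blast
  have R: "R \<subseteq> {1..<int p}" by (auto simp: R_def quad_res_set_def)
  have fR: "finite R" using R finite_subset by blast
  define Off where "Off = {x \<in> A \<times> A. fst x \<noteq> snd x}"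
  define Dg where "Dg = {x \<in> A \<times> A. fst x = snd x}"
  define D where "D x = (fst x - snd x) mod int p" for x
  have de1: "\<And>s. s \<in> R \<Longrightarrow> \<exists>!(a1, a2). a1 \<in> A \<and> a2 \<in> A \<and> (a1 - a2) mod int p = s"
    and de2: "\<And>a1 a2. a1 \<in> A \<Longrightarrow> a2 \<in> A \<Longrightarrow> a1 \<noteq> a2 \<Longrightarrow> (a1 - a2) mod int p \<in> R"
    using de by (auto simp: diff_exact_def R_def)
  have bij: "bij_betw D Off R"
  proof (rule bij_betw_imageI)
    show "inj_on D Off"
    proof (rule inj_onI)
      fix x y assume x: "x \<in> Off" and y: "y \<in> Off" and e: "D x = D y"
      obtain a1 a2 where xa: "x = (a1, a2)" by force
      obtain b1 b2 where yb: "y = (b1, b2)" by force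
      have "D x \<in> R" using x de2 by (auto simp: Off_def D_def xa)
      from de1[OF this] have "\<exists>!(c1, c2). c1 \<in> A \<and> c2 \<in> A \<and> (c1 - c2) mod int p = D x" .
      then show "x = y" using x y e unfolding Off_def D_def xa yb by (auto dest: ex1_implies_ex)
    qed
  next
    show "D ` Off = R"
    proof
      show "D ` Off \<subseteq> R" using de2 by (auto simp: Off_def D_def)
    next
      show "R \<subseteq> D ` Off"
      proof
        fix s assume s: "s \<in> R"
        then obtain a1 a2 where a: "a1 \<in> A" "a2 \<in> A" "(a1 - a2) mod int p = s"
          using de1[OF s] by blast
        have "s \<noteq> 0" using s R by auto
        then have "a1 \<noteq> a2" using a by auto
        then have "(a1, a2) \<in> Off" using a by (simp add: Off_def)
        then show "s \<in> D ` Off" using a by (force simp: D_def)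
      qed
    qed
  qed
  have cOff: "card Off = card R" using bij by (rule bij_betw_same_card)
  have AA: "A \<times> A = Dg \<union> Off" "Dg \<inter> Off = {}" by (auto simp: Dg_def Off_def)
  have Dg_img: "Dg = (\<lambda>a. (a, a)) ` A" by (auto simp: Dg_def)
  have cDg: "card Dg = card A" unfolding Dg_img by (rule card_image) (auto intro: inj_onI)
  have fAA: "finite (A \<times> A)" using fA by simp
  have "card (A \<times> A) = card Dg + card Off" using AA fAA by (metis card_Un_disjoint finite_Un)
  then have cOff2: "card Off + card A = card A * card A" using cDg by (simp add: card_cartesian_product)
  define n where "n = card A"
  have pn: "int p = 2 * int n * (int n - 1) + 1"
  proof (cases "p = 2")
    case True
    then have "card R = 1" by (simp add: R_def qr_2)
    then have "1 + n = n * n" using cOff cOff2 n_def by simp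
    then show ?thesis
    proof (cases "n \<le> 1")
      case True then show ?thesis using \<open>1 + n = n * n\<close> by (cases n) auto
    next
      case False
      then have "2 * n \<le> n * n" by simp
      then show ?thesis using \<open>1 + n = n * n\<close> False by linarith
    qed
  next
    case False
    then have "p > 2" using p2 by simp
    then have "2 * card R = p - 1" using card_qr[OF prime] by (simp add: R_def)
    then have e: "int p = 2 * int (card Off) + 1" using cOff p2 by linarith
    have "int (card Off) + int n = int n * int n" using cOff2 n_def by (metis of_nat_add of_nat_mult)
    then have "int p = 2 * (int n * int n) - 2 * int n + 1" using e by linarith
    then show ?thesis by (simp add: algebra_simps)
  qed
  define \<alpha> where "\<alpha> = (\<Sum>a\<in>A. z powi a)"
  have "\<alpha> \<in> cyc_int p z"
    unfolding cyc_int_def \<alpha>_def alpha_coeffs[OF A]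
    by (rule CollectI, rule exI[where x="\<lambda>j. if int j \<in> A then 1 else (0::int)"]) simp
  moreover have "complex_of_real ((cmod \<alpha>)\<^sup>2) = of_int (int n) + gauss_period p z"
  proof -
    have "complex_of_real ((cmod \<alpha>)\<^sup>2) = (\<Sum>x\<in>A \<times> A. z powi (fst x - snd x))"
      unfolding \<alpha>_def using A by (intro norm_sq_sum fA) auto
    also have "\<dots> = (\<Sum>x\<in>Dg. z powi (fst x - snd x)) + (\<Sum>x\<in>Off. z powi (fst x - snd x))"
      unfolding AA(1) using AA(2) fAA AA(1) by (intro sum.union_disjoint) auto
    also have "(\<Sum>x\<in>Dg. z powi (fst x - snd x)) = of_nat (card Dg)"
      by (simp add: Dg_def)
    also have "(\<Sum>x\<in>Off. z powi (fst x - snd x)) = (\<Sum>x\<in>Off. z powi (D x))"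
      by (rule sum.cong) (simp_all add: D_def zpowi_mod[of "fst _ - snd _"])
    also have "\<dots> = (\<Sum>s\<in>R. z powi s)"
      by (rule sum.reindex_bij_betw[OF bij])
    finally show ?thesis using cDg by (simp add: gauss_period_def R_def n_def)
  qed
  moreover have "\<forall>k :: int. cyc_trace p z (\<alpha> * z powi (- k)) \<in> {of_int (- int n), of_int (int p - int n)}"
    using trace_A[OF A] by (simp add: \<alpha>_def n_def)
  ultimately show ?thesis using pn by blast
qed

end


context cyc begin

lemma pn_facts:
  assumes pn: "int p = 2 * n * (n - 1) + 1"
  shows "n \<noteq> 0" "n \<noteq> int p"
proof -
  show "n \<noteq> 0"
  proof
    assume "n = 0"
    then have "int p = 1" using pn by simp
    then show False using p2 by simp
  qed
  show "n \<noteq> int p"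
  proof
    assume n: "n = int p"
    have "2 * int p * 1 \<le> 2 * int p * (int p - 1)" using p2 by (intro mult_left_mono) auto
    moreover have "int p = 2 * int p * (int p - 1) + 1" using pn unfolding n .
    ultimately show False using p2 by linarith
  qed
qed

lemma dvd_diff_range_eq:
  fixes a b m :: int
  assumes "a \<in> {0..<m}" "b \<in> {0..<m}" "m dvd (a - b)"
  shows "a = b"
proof (rule ccontr)
  assume "a \<noteq> b"
  then have "\<bar>a - b\<bar> > 0" by simp
  moreover have "m dvd \<bar>a - b\<bar>" using assms(3) by simp
  ultimately have "m \<le> \<bar>a - b\<bar>" by (rule zdvd_imp_le[rotated])
  moreover have "\<bar>a - b\<bar> < m" using assms(1,2) by (simp add: abs_less_iff)
  ultimately show False by simp
qed

end


context cyc begin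

lemma backward:
  assumes pn: "int p = 2 * n * (n - 1) + 1"
    and \<alpha>: "\<alpha> \<in> cyc_int p z"
    and nrm: "complex_of_real ((cmod \<alpha>)\<^sup>2) = of_int n + gauss_period p z"
    and tr: "\<forall>k :: int. cyc_trace p z (\<alpha> * z powi (- k)) \<in> {of_int (- n), of_int (int p - n)}"
  shows "\<exists>A \<subseteq> Fp p. diff_exact p A (quad_res_set p)"
proof -
  define R where "R = quad_res_set p"
  have Rsub: "R \<subseteq> {1..<int p}" by (auto simp: R_def quad_res_set_def)
  have fR: "finite R" using Rsub finite_subset by blast
  obtain c where c: "\<alpha> = (\<Sum>j<p. of_int (c j) * z ^ j)" using \<alpha> by (auto simp: cyc_int_def)
  define S where "S = (\<Sum>j<p. c j)"
  have tk: "int p * c k - S = - n \<or> int p * c k - S = int p - n" if k: "k < p" for k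
  proof -
    have "cyc_trace p z (\<alpha> * z powi (- int k)) = of_int (int p * c k - S)"
      unfolding c S_def by (rule trace_shift[OF k])
    moreover have "cyc_trace p z (\<alpha> * z powi (- int k)) \<in> {of_int (- n), of_int (int p - n)}"
      using tr by blast
    ultimately have "(of_int (int p * c k - S) :: complex) \<in> {of_int (- n), of_int (int p - n)}"
      by (simp only:)
    then show ?thesis by (simp only: insert_iff empty_iff of_int_eq_iff simp_thms)
  qed
  define m where "m = (S - n) div int p"
  have e1: "int p * (c 0 - 1) = int p * c 0 - int p" by (simp add: right_diff_distrib)
  have "S - n = int p * c 0 \<or> S - n = int p * (c 0 - 1)" using tk[OF p0] e1 by linarith
  then have "int p dvd (S - n)" by (metis dvd_triv_left)
  then have Sm: "S - n = int p * m" by (simp add: m_def)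
  have cm: "c k = m \<or> c k = m + 1" if "k < p" for k
  proof -
    have e2: "int p * (m + 1) = int p * m + int p" by (simp add: distrib_left)
    from tk[OF that] have "int p * c k = int p * m \<or> int p * c k = int p * (m + 1)"
      using Sm e2 by linarith
    then show ?thesis using p0 by (metis mult_left_cancel of_nat_0_less_iff less_irrefl)
  qed
  define A where "A = int ` {k. k < p \<and> c k = m + 1}"
  have A: "A \<subseteq> {0..<int p}" by (auto simp: A_def)
  have fA: "finite A" using A finite_subset by blast
  have indA: "(if int j \<in> A then 1 else 0) = c j - m" if "j < p" for j
    using cm[OF that] that by (auto simp: A_def)
  have sumz: "(\<Sum>j<p. z ^ j) = 0" using poly_cycl_z by (simp add: poly_cycl)
  have \<alpha>A: "\<alpha> = (\<Sum>a\<in>A. z powi a)"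
  proof -
    have "\<alpha> = (\<Sum>j<p. of_int (c j - m) * z ^ j + of_int m * z ^ j)"
      unfolding c by (rule sum.cong) (simp_all add: algebra_simps)
    also have "\<dots> = (\<Sum>j<p. of_int (c j - m) * z ^ j) + of_int m * (\<Sum>j<p. z ^ j)"
      by (simp add: sum.distrib sum_distrib_left)
    also have "\<dots> = (\<Sum>j<p. of_int (if int j \<in> A then 1 else 0) * z ^ j)"
      using sumz by (simp add: indA)
    also have "\<dots> = (\<Sum>a\<in>A. z powi a)" by (rule alpha_coeffs[OF A, symmetric])
    finally show ?thesis .
  qed
  define a where "a = int (card A)"
  have val: "int p * (if int k \<in> A then 1 else 0) - a = - n \<or> int p * (if int k \<in> A then 1 else 0) - a = int p - n"
    if k: "k < p" for k
  proof -
    have "cyc_trace p z (\<alpha> * z powi (- int k)) =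
        of_int (int p * (if int k \<in> A then 1 else 0) - a)"
      unfolding \<alpha>A alpha_coeffs[OF A] trace_shift[OF k] card_A_sum[OF A] a_def ..
    moreover have "cyc_trace p z (\<alpha> * z powi (- int k)) \<in> {of_int (- n), of_int (int p - n)}"
      using tr by blast
    ultimately have "(of_int (int p * (if int k \<in> A then 1 else 0) - a) :: complex) \<in> {of_int (- n), of_int (int p - n)}"
      by (simp only:)
    then show ?thesis by (simp only: insert_iff empty_iff of_int_eq_iff simp_thms)
  qed
  have n0: "n \<noteq> 0" "n \<noteq> int p" using pn_facts[OF pn] by auto
  have an: "a = n"
  proof (cases "A = {}")
    case True
    then have "a = 0" by (simp add: a_def)
    then show ?thesis using val[OF p0] True n0 by auto
  next
    case False
    then obtain k0 where k0: "int k0 \<in> A" "k0 < p" using A by (auto simp: A_def)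
    have v0: "int p - a = - n \<or> int p - a = int p - n" using val[OF k0(2)] k0(1) by simp
    show ?thesis
    proof (cases "\<exists>k<p. int k \<notin> A")
      case True
      then obtain k1 where k1: "k1 < p" "int k1 \<notin> A" by blast
      have "- a = - n \<or> - a = int p - n" using val[OF k1(1)] k1(2) by simp
      then show ?thesis using v0 p0 by linarith
    next
      case False
      have "A = int ` {..<p}"
      proof
        show "A \<subseteq> int ` {..<p}" unfolding A_def by auto
        show "int ` {..<p} \<subseteq> A" using False by auto
      qed
      then have "a = int p" by (simp add: a_def card_image)
      then show ?thesis using v0 n0 by auto
    qed
  qed
  define N where "N i = card {x \<in> A \<times> A. (fst x - snd x) mod int p = int i}" for i
  have fAA: "finite (A \<times> A)" using fA by simp
  have "complex_of_real ((cmod \<alpha>)\<^sup>2) = (\<Sum>x\<in>A \<times> A. z powi (fst x - snd x))"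
    unfolding \<alpha>A using A by (intro norm_sq_sum fA) auto
  also have "\<dots> = (\<Sum>i<p. of_nat (N i) * z ^ i)" unfolding N_def by (rule sum_zpowi[OF fAA])
  finally have lhs: "complex_of_real ((cmod \<alpha>)\<^sup>2) = (\<Sum>i<p. of_int (int (N i)) * z ^ i)" by simp
  have rho: "gauss_period p z = (\<Sum>i<p. of_int (if int i \<in> R then 1 else 0) * z ^ i)"
    unfolding gauss_period_def R_def[symmetric] using Rsub by (intro alpha_coeffs) auto
  have nsum: "(of_int n :: complex) = (\<Sum>i<p. of_int (if i = 0 then n else 0) * z ^ i)"
  proof -
    have "(\<Sum>i<p. of_int (if i = 0 then n else 0) * z ^ i) = (\<Sum>i<p. (if i = 0 then of_int n else 0 :: complex))"
      by (rule sum.cong) auto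
    also have "\<dots> = of_int n" using p0 by (simp add: sum.delta)
    finally show ?thesis by simp
  qed
  define co where "co i = int (N i) - (if i = 0 then n else 0) - (if int i \<in> R then 1 else 0)" for i
  have "(\<Sum>i<p. of_int (co i) * z ^ i) =
        (\<Sum>i<p. of_int (int (N i)) * z ^ i) - (\<Sum>i<p. of_int (if i = 0 then n else 0) * z ^ i)
          - (\<Sum>i<p. of_int (if int i \<in> R then 1 else 0) * z ^ i)"
    by (simp add: co_def algebra_simps sum_subtractf sum.distrib)
  also have "\<dots> = 0"
  proof -
    have "(\<Sum>i<p. of_int (int (N i)) * z ^ i) = (\<Sum>i<p. of_int (if i = 0 then n else 0) * z ^ i)
          + (\<Sum>i<p. of_int (if int i \<in> R then 1 else 0) * z ^ i)"
      using nrm lhs rho nsum by simp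
    then show ?thesis by simp
  qed
  finally have allco: "\<forall>i<p. co i = co 0" by (rule K)
  have N0: "N 0 = card A"
  proof -
    have "{x \<in> A \<times> A. (fst x - snd x) mod int p = int 0} = (\<lambda>a. (a, a)) ` A"
    proof
      show "{x \<in> A \<times> A. (fst x - snd x) mod int p = int 0} \<subseteq> (\<lambda>a. (a, a)) ` A"
      proof
        fix x assume "x \<in> {x \<in> A \<times> A. (fst x - snd x) mod int p = int 0}"
        then have x: "fst x \<in> A" "snd x \<in> A" "(fst x - snd x) mod int p = 0" by (auto simp: mem_Times_iff)
        then have "int p dvd (fst x - snd x)" by (simp add: dvd_eq_mod_eq_0)
        then have "fst x = snd x" using x A by (intro dvd_diff_range_eq[of _ "int p"]) auto
        then show "x \<in> (\<lambda>a. (a, a)) ` A" using x by (cases x) auto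
      qed
      show "(\<lambda>a. (a, a)) ` A \<subseteq> {x \<in> A \<times> A. (fst x - snd x) mod int p = int 0}" by auto
    qed
    then show ?thesis unfolding N_def by (simp add: card_image inj_on_def)
  qed
  have R0: "0 \<notin> R" using Rsub by auto
  have co0: "co 0 = 0" using N0 an R0 by (simp add: co_def a_def)
  have coN: "int (N i) = (if int i \<in> R then 1 else 0)" if "i < p" "i \<noteq> 0" for i
  proof -
    have "co i = co 0" using allco that(1) by blast
    then have "co i = 0" using co0 by simp
    then show ?thesis using that(2) by (simp add: co_def)
  qed
  have "diff_exact p A R"
    unfolding diff_exact_def
  proof (intro conjI ballI impI)
    fix s assume s: "s \<in> R"
    define i where "i = nat s"
    have sr: "1 \<le> s" "s < int p" using s Rsub by auto
    then have i: "i < p" "i \<noteq> 0" "int i = s" by (auto simp: i_def nat_less_iff)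
    have "N i = 1" using coN[OF i(1) i(2)] i(3) s by simp
    then obtain x0 where x0: "{x \<in> A \<times> A. (fst x - snd x) mod int p = s} = {x0}"
      using i(3) by (auto simp: N_def card_1_singleton_iff)
    show "\<exists>!(a1, a2). a1 \<in> A \<and> a2 \<in> A \<and> (a1 - a2) mod int p = s"
    proof (rule ex1I[of _ x0])
      show "case x0 of (a1, a2) \<Rightarrow> a1 \<in> A \<and> a2 \<in> A \<and> (a1 - a2) mod int p = s"
        using x0 by (auto simp: set_eq_iff split: prod.splits)
    next
      fix y assume "case y of (a1, a2) \<Rightarrow> a1 \<in> A \<and> a2 \<in> A \<and> (a1 - a2) mod int p = s"
      then have "y \<in> {x \<in> A \<times> A. (fst x - snd x) mod int p = s}" by (auto split: prod.splits)
      then show "y = x0" using x0 by simp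
    qed
  next
    fix a1 a2 assume a1: "a1 \<in> A" and a2: "a2 \<in> A" and ne: "a1 \<noteq> a2"
    define d where "d = (a1 - a2) mod int p"
    have d: "0 \<le> d" "d < int p" using p0 by (auto simp: d_def)
    have "d \<noteq> 0"
    proof
      assume "d = 0"
      then have "int p dvd (a1 - a2)" by (simp add: d_def dvd_eq_mod_eq_0)
      then have "a1 = a2" using a1 a2 A by (intro dvd_diff_range_eq[of _ "int p"]) auto
      then show False using ne by simp
    qed
    define i where "i = nat d"
    have i: "i < p" "i \<noteq> 0" "int i = d" using d \<open>d \<noteq> 0\<close> by (auto simp: i_def)
    have "(a1, a2) \<in> {x \<in> A \<times> A. (fst x - snd x) mod int p = int i}" using a1 a2 i by (simp add: d_def)
    then have "N i \<noteq> 0" unfolding N_def using fAA by (metis (no_types, lifting) card_0_eq empty_iff finite_subset mem_Collect_eq subsetI)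
    then have "int i \<in> R" using coN[OF i(1) i(2)] by (auto split: if_splits)
    then show "(a1 - a2) mod int p \<in> R" using i by (simp add: d_def)
  qed
  moreover have "A \<subseteq> Fp p" using A by (simp add: Fp_def)
  ultimately show ?thesis by (auto simp: R_def)
qed

end


theorem propositionA1:
  fixes p :: nat and \<zeta> :: complex
  assumes "prime p"
    and "\<zeta> ^ p = 1" and "\<zeta> \<noteq> 1"
  shows "(\<exists>A \<subseteq> Fp p. diff_exact p A (quad_res_set p)) \<longleftrightarrow>
    (\<exists>n :: int. int p = 2 * n * (n - 1) + 1 \<and>
       (\<exists>\<alpha> \<in> cyc_int p \<zeta>.
          complex_of_real ((cmod \<alpha>)\<^sup>2) = of_int n + gauss_period p \<zeta> \<and>
          (\<forall>k :: int. cyc_trace p \<zeta> (\<alpha> * \<zeta> powi (- k)) \<in> {of_int (- n), of_int (int p - n)})))"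
proof -
  interpret cyc p \<zeta> using assms by unfold_locales
  show ?thesis
  proof
    assume "\<exists>A \<subseteq> Fp p. diff_exact p A (quad_res_set p)"
    then obtain A where "A \<subseteq> Fp p" "diff_exact p A (quad_res_set p)" by blast
    then show "\<exists>n :: int. int p = 2 * n * (n - 1) + 1 \<and>
       (\<exists>\<alpha> \<in> cyc_int p \<zeta>.
          complex_of_real ((cmod \<alpha>)\<^sup>2) = of_int n + gauss_period p \<zeta> \<and>
          (\<forall>k :: int. cyc_trace p \<zeta> (\<alpha> * \<zeta> powi (- k)) \<in> {of_int (- n), of_int (int p - n)}))"
      by (rule forward)
  next
    assume "\<exists>n :: int. int p = 2 * n * (n - 1) + 1 \<and>
       (\<exists>\<alpha> \<in> cyc_int p \<zeta>.
          complex_of_real ((cmod \<alpha>)\<^sup>2) = of_int n + gauss_period p \<zeta> \<and>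
          (\<forall>k :: int. cyc_trace p \<zeta> (\<alpha> * \<zeta> powi (- k)) \<in> {of_int (- n), of_int (int p - n)}))"
    then obtain n \<alpha> where "int p = 2 * n * (n - 1) + 1" "\<alpha> \<in> cyc_int p \<zeta>"
      "complex_of_real ((cmod \<alpha>)\<^sup>2) = of_int n + gauss_period p \<zeta>"
      "\<forall>k :: int. cyc_trace p \<zeta> (\<alpha> * \<zeta> powi (- k)) \<in> {of_int (- n), of_int (int p - n)}"
      by blast
    then show "\<exists>A \<subseteq> Fp p. diff_exact p A (quad_res_set p)" by (rule backward)
  qed
qed

end
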